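(* Let $\lambda\in\mathbb{C}$ with $|\lambda|\neq 0,1$, let $l\ge 0$, and let $\Lambda$ be the $(l+1)\times(l+1)$ matrix with all diagonal entries equal to $\lambda$, all entries directly below the diagonal equal to $1$, and all other entries $0$. Let $S$ be a set with a bijection $R\colon S\to S$, and let $h\colon S\to\mathbb{C}^{l+1}$ be a function such that $\|h\circ R-\Lambda^{-1}h\|$ is bounded on $S$. Then there is a unique function $\widehat{h}\colon S\to\mathbb{C}^{l+1}$ satisfying $\widehat h\circ R=\Lambda^{-1}\widehat h$ and such that $\|\widehat h-h\|$ is bounded on $S$.
   Context: $\|\cdot\|$ denotes the sup norm on $\mathbb{C}^{l+1}$: $\|(a_0,\dots,a_l)\|=\max_i|a_i|$. *)

theory Defs
  imports Complex_Main "Jordan_Normal_Form.Gauss_Jordan_Elimination"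
begin

text \<open>Sup norm on complex vectors (elements of C^{l+1} represented as vectors of dimension l+1).\<close>
definition supnorm :: "complex vec \<Rightarrow> real" where
  "supnorm v = Max ((\<lambda>i. cmod (v $ i)) ` {..<dim_vec v})"

definition Lambda_mat :: "complex \<Rightarrow> nat \<Rightarrow> complex mat" where
  "Lambda_mat lam l = mat (l+1) (l+1)
     (\<lambda>(i,j). if i = j then lam else if i = j + 1 then 1 else 0)"

text \<open>Its inverse (computed via Gauss-Jordan; exists since lam is nonzero).\<close>
definition Lambda_inv :: "complex \<Rightarrow> nat \<Rightarrow> complex mat" where
  "Lambda_inv lam l = the (mat_inverse (Lambda_mat lam l))"

end

theory Submission
  imports Defs "Jordan_Normal_Form.Determinant"
begin

lemma Lam_carrier: "Lambda_mat lam l \<in> carrier_mat (l+1) (l+1)"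
  unfolding Lambda_mat_def by auto

lemma Lam_inv:
  assumes "lam \<noteq> 0"
  shows "Lambda_mat lam l * Lambda_inv lam l = 1\<^sub>m (l+1) \<and> Lambda_inv lam l * Lambda_mat lam l = 1\<^sub>m (l+1)
     \<and> Lambda_inv lam l \<in> carrier_mat (l+1) (l+1)"
proof -
  have "det (Lambda_mat lam l) = prod_list (diag_mat (Lambda_mat lam l))"
    by (rule det_lower_triangular[OF _ Lam_carrier]) (auto simp: Lambda_mat_def)
  also have "diag_mat (Lambda_mat lam l) = replicate (l+1) lam"
    by (rule nth_equalityI) (auto simp: diag_mat_def Lambda_mat_def simp del: upt_Suc replicate_Suc)
  also have "prod_list (replicate (l+1) lam) = lam ^ (l+1)" by simp
  finally have "det (Lambda_mat lam l) \<noteq> 0" using assms by simp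
  from det_non_zero_imp_unit[OF Lam_carrier this]
  have "Lambda_mat lam l \<in> Units (ring_mat TYPE(complex) (l+1) undefined)" .
  then have "mat_inverse (Lambda_mat lam l) \<noteq> None"
    using mat_inverse(1)[OF Lam_carrier, where b=undefined] by blast
  then obtain B where "mat_inverse (Lambda_mat lam l) = Some B" by auto
  then show ?thesis using mat_inverse(2)[OF Lam_carrier] unfolding Lambda_inv_def by auto
qed

lemma Lam_mult:
  assumes "dim_vec v = l+1" "k < l+1"
  shows "(Lambda_mat lam l *\<^sub>v v) $ k = lam * v $ k + (if k = 0 then 0 else v $ (k-1))"
proof -
  have "(Lambda_mat lam l *\<^sub>v v) $ k = (\<Sum>j<l+1. (if k = j then lam else if k = j + 1 then 1 else 0) * v $ j)"
    using assms unfolding Lambda_mat_def mult_mat_vec_def scalar_prod_def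
    by (auto simp: atLeast0LessThan intro!: sum.cong)
  also have "\<dots> = (\<Sum>j<l+1. (if j = k then lam * v $ k else 0) + (if k \<noteq> 0 \<and> j = k - 1 then v $ j else 0))"
    by (intro sum.cong) auto
  also have "\<dots> = lam * v $ k + (if k = 0 then 0 else v $ (k-1))"
    using assms by (simp add: sum.distrib; arith)
  finally show ?thesis .
qed

lemma supnorm_comp: "i < dim_vec v \<Longrightarrow> cmod (v $ i) \<le> supnorm v"
  unfolding supnorm_def by (rule Max_ge) auto

lemma supnorm_le: "0 < dim_vec v \<Longrightarrow> (\<And>i. i < dim_vec v \<Longrightarrow> cmod (v $ i) \<le> B) \<Longrightarrow> supnorm v \<le> B"
  unfolding supnorm_def by (subst Max_le_iff) auto

lemma geo_sol:
  fixes c :: complex and f :: "'s \<Rightarrow> complex" and T :: "'s \<Rightarrow> 's"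
  assumes c: "cmod c < 1" and fB: "\<And>s. cmod (f s) \<le> B"
  shows "\<exists>u. (\<forall>s. u s = c * u (T s) + f s) \<and> (\<exists>C. \<forall>s. cmod (u s) \<le> C)"
proof -
  define g where "g s n = c ^ n * f ((T ^^ n) s)" for s n
  have nb: "norm (g s n) \<le> B * cmod c ^ n" for s n
  proof -
    have "cmod c^n * cmod (f ((T ^^ n) s)) \<le> cmod c^n * B" by (rule mult_left_mono[OF fB]) simp
    then show ?thesis by (simp add: g_def norm_mult norm_power mult.commute)
  qed
  have sg: "summable (\<lambda>n. B * cmod c ^ n)"
    using c by (intro summable_mult summable_geometric) auto
  have sn: "summable (\<lambda>n. norm (g s n))" for s
    by (rule summable_comparison_test[OF _ sg]) (use nb in auto)
  have s: "summable (g s)" for s using sn by (rule summable_norm_cancel)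
  define u where "u s = suminf (g s)" for s
  have "u s = c * u (T s) + f s" for s
  proof -
    have gs: "g s (Suc n) = c * g (T s) n" for n
      unfolding g_def by (simp add: funpow_swap1)
    have "suminf (\<lambda>n. g s (Suc n)) = suminf (g s) - g s 0"
      by (rule suminf_split_head[OF s])
    moreover have "suminf (\<lambda>n. g s (Suc n)) = c * u (T s)"
      unfolding gs u_def by (rule suminf_mult[OF s])
    moreover have "g s 0 = f s" unfolding g_def by simp
    ultimately show ?thesis unfolding u_def by simp
  qed
  moreover have "cmod (u s) \<le> (\<Sum>n. B * cmod c ^ n)" for s
  proof -
    have "cmod (u s) \<le> (\<Sum>n. norm (g s n))" unfolding u_def by (rule summable_norm[OF sn])
    also have "\<dots> \<le> (\<Sum>n. B * cmod c ^ n)" by (rule suminf_le[OF _ sn sg]) (use nb in auto)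
    finally show ?thesis .
  qed
  ultimately show ?thesis by blast
qed

lemma geo_zero:
  fixes c :: complex and u :: "'s \<Rightarrow> complex" and T :: "'s \<Rightarrow> 's"
  assumes c: "cmod c < 1" and eq: "\<And>s. u s = c * u (T s)" and uB: "\<And>s. cmod (u s) \<le> B"
  shows "u s = 0"
proof -
  have "\<forall>s. cmod (u s) \<le> cmod c ^ n * B" for n
  proof (induction n)
    case 0 then show ?case using uB by simp
  next
    case (Suc n)
    show ?case
    proof
      fix s
      have "cmod (u s) = cmod c * cmod (u (T s))" using eq[of s] by (simp add: norm_mult)
      also have "\<dots> \<le> cmod c * (cmod c ^ n * B)" using Suc by (intro mult_left_mono) auto
      finally show "cmod (u s) \<le> cmod c ^ Suc n * B" by (simp add: mult.assoc)
    qed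
  qed
  then have bnd: "\<exists>N. \<forall>n\<ge>N. cmod (u s) \<le> cmod c ^ n * B" by blast
  have lim: "(\<lambda>n. cmod c ^ n * B) \<longlonglongrightarrow> 0"
    using c by (intro tendsto_mult_left_zero LIMSEQ_power_zero) auto
  have "cmod (u s) \<le> 0"
    by (rule LIMSEQ_le_const[OF lim bnd])
  then show ?thesis by simp
qed

lemma scal_exist:
  fixes lam :: complex and f :: "'s \<Rightarrow> complex" and R :: "'s \<Rightarrow> 's"
  assumes l0: "cmod lam \<noteq> 0" and l1: "cmod lam \<noteq> 1" and R: "bij R" and fB: "\<And>s. cmod (f s) \<le> B"
  shows "\<exists>u. (\<forall>s. u s - lam * u (R s) = f s) \<and> (\<exists>C. \<forall>s. cmod (u s) \<le> C)"
proof (cases "cmod lam < 1")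
  case True
  have "\<exists>u. (\<forall>s. u s = lam * u (R s) + f s) \<and> (\<exists>C. \<forall>s. cmod (u s) \<le> C)"
    by (rule geo_sol[of lam f B R]) (use True fB in auto)
  then obtain u where u1: "\<forall>s. u s = lam * u (R s) + f s" and u2: "\<exists>C. \<forall>s. cmod (u s) \<le> C"
    by blast
  have "u s - lam * u (R s) = f s" for s using u1[rule_format, of s] by simp
  then show ?thesis using u2 by blast
next
  case False
  then have gt: "cmod lam > 1" using l1 by linarith
  have lz: "lam \<noteq> 0" using l0 by auto
  have "cmod (1/lam) = 1 / cmod lam" by (simp add: norm_divide)
  then have c: "cmod (1/lam) < 1" using gt by (simp add: divide_less_eq_1)
  have fB': "cmod (- f s / lam) \<le> B / cmod lam" for s
  proof -
    have "cmod (- f s / lam) = cmod (f s) / cmod lam" by (simp add: norm_divide)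
    also have "\<dots> \<le> B / cmod lam" by (rule divide_right_mono[OF fB]) simp
    finally show ?thesis .
  qed
  have "\<exists>v. (\<forall>s. v s = 1/lam * v (inv_into UNIV R s) + - f s / lam) \<and> (\<exists>C. \<forall>s. cmod (v s) \<le> C)"
    by (rule geo_sol[of "1/lam" "\<lambda>s. - f s / lam" "B / cmod lam" "inv_into UNIV R"]) (use c fB' in auto)
  then obtain v where
    v: "\<forall>s. v s = 1/lam * v (inv_into UNIV R s) + - f s / lam" and vb: "\<exists>C. \<forall>s. cmod (v s) \<le> C" by blast
  define u where "u s = v (inv_into UNIV R s)" for s
  have "u s - lam * u (R s) = f s" for s
  proof -
    have "inv_into UNIV R (R s) = s" using R by (meson bij_is_inj inv_into_f_f UNIV_I)
    then have "u (R s) = v s" unfolding u_def by simp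
    moreover have "lam * v s = v (inv_into UNIV R s) - f s" using v[rule_format, of s] lz
      by (simp add: field_simps)
    ultimately show ?thesis unfolding u_def by simp
  qed
  moreover have "\<exists>C. \<forall>s. cmod (u s) \<le> C" using vb unfolding u_def by blast
  ultimately show ?thesis by blast
qed

lemma scal_uniq:
  fixes lam :: complex and u :: "'s \<Rightarrow> complex" and R :: "'s \<Rightarrow> 's"
  assumes l0: "cmod lam \<noteq> 0" and l1: "cmod lam \<noteq> 1" and R: "bij R"
    and eq: "\<And>s. u s = lam * u (R s)" and uB: "\<And>s. cmod (u s) \<le> B"
  shows "u s = 0"
proof (cases "cmod lam < 1")
  case True
  show ?thesis by (rule geo_zero[of lam u R B, OF True eq uB])
next
  case False
  then have gt: "cmod lam > 1" using l1 by linarith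
  have lz: "lam \<noteq> 0" using l0 by auto
  have "cmod (1/lam) = 1 / cmod lam" by (simp add: norm_divide)
  then have c: "cmod (1/lam) < 1" using gt by (simp add: divide_less_eq_1)
  have "u s = 1/lam * u (inv_into UNIV R s)" for s
  proof -
    have "R (inv_into UNIV R s) = s" using R by (meson bij_is_surj surj_f_inv_f)
    then have "u (inv_into UNIV R s) = lam * u s" using eq[of "inv_into UNIV R s"] by simp
    then show ?thesis using lz by simp
  qed
  then show ?thesis by (rule geo_zero[of "1/lam" u "inv_into UNIV R" B, OF c _ uB])
qed

lemma Lam_equiv:
  assumes lz: "lam \<noteq> 0" and "dim_vec x = l+1" "dim_vec y = l+1"
  shows "y = Lambda_inv lam l *\<^sub>v x \<longleftrightarrow> Lambda_mat lam l *\<^sub>v y = x"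
proof -
  from Lam_inv[OF lz, of l] have LM: "Lambda_mat lam l * Lambda_inv lam l = 1\<^sub>m (l+1)"
    and MiL: "Lambda_inv lam l * Lambda_mat lam l = 1\<^sub>m (l+1)"
    and Mc: "Lambda_inv lam l \<in> carrier_mat (l+1) (l+1)" by auto
  have xc: "x \<in> carrier_vec (l+1)" and yc: "y \<in> carrier_vec (l+1)"
    using assms by (auto intro: carrier_vecI)
  have "Lambda_mat lam l *\<^sub>v (Lambda_inv lam l *\<^sub>v x) = (Lambda_mat lam l * Lambda_inv lam l) *\<^sub>v x"
    by (rule assoc_mult_mat_vec[OF Lam_carrier Mc xc, symmetric])
  also have "\<dots> = x" unfolding LM using xc by (rule one_mult_mat_vec)
  finally have 1: "Lambda_mat lam l *\<^sub>v (Lambda_inv lam l *\<^sub>v x) = x" .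
  have "Lambda_inv lam l *\<^sub>v (Lambda_mat lam l *\<^sub>v y) = (Lambda_inv lam l * Lambda_mat lam l) *\<^sub>v y"
    by (rule assoc_mult_mat_vec[OF Mc Lam_carrier yc, symmetric])
  also have "\<dots> = y" unfolding MiL using yc by (rule one_mult_mat_vec)
  finally have 2: "Lambda_inv lam l *\<^sub>v (Lambda_mat lam l *\<^sub>v y) = y" .
  show ?thesis
  proof
    assume "y = Lambda_inv lam l *\<^sub>v x"
    then show "Lambda_mat lam l *\<^sub>v y = x" using 1 by simp
  next
    assume "Lambda_mat lam l *\<^sub>v y = x"
    then have "Lambda_inv lam l *\<^sub>v x = y" using 2 by simp
    then show "y = Lambda_inv lam l *\<^sub>v x" by simp
  qed
qed
theorem proposition3p2:
  fixes lam :: complex and l :: nat and R :: "'s \<Rightarrow> 's" and h :: "'s \<Rightarrow> complex vec"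
  assumes "cmod lam \<noteq> 0" and "cmod lam \<noteq> 1"
    and "bij R"
    and "\<forall>s. dim_vec (h s) = l + 1"
    and "\<exists>B. \<forall>s. supnorm (h (R s) - Lambda_inv lam l *\<^sub>v h s) \<le> B"
  shows "\<exists>!hh :: 's \<Rightarrow> complex vec.
           (\<forall>s. dim_vec (hh s) = l + 1) \<and>
           (\<forall>s. hh (R s) = Lambda_inv lam l *\<^sub>v hh s) \<and>
           (\<exists>B. \<forall>s. supnorm (hh s - h s) \<le> B)"
proof -
  let ?L = "Lambda_mat lam l"
  let ?M = "Lambda_inv lam l"
  have lz: "lam \<noteq> 0" using assms(1) by auto
  from Lam_inv[OF lz, of l] have LM: "?L * ?M = 1\<^sub>m (l+1)" and MiL: "?M * ?L = 1\<^sub>m (l+1)"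
    and Mc: "?M \<in> carrier_mat (l+1) (l+1)" by auto
  have dh: "dim_vec (h s) = l+1" for s using assms(4) by auto
  have equiv: "\<And>x y. dim_vec x = l+1 \<Longrightarrow> dim_vec y = l+1 \<Longrightarrow> (y = ?M *\<^sub>v x \<longleftrightarrow> ?L *\<^sub>v y = x)"
    using Lam_equiv[OF lz] by blast
  have dM: "dim_vec (?M *\<^sub>v v) = l+1" for v using Mc by auto
  show ?thesis
  proof (rule ex_ex1I)
    from assms(5) obtain B0 where B0: "\<forall>s. supnorm (h (R s) - ?M *\<^sub>v h s) \<le> B0" by blast
    define e where "e s = h (R s) - ?M *\<^sub>v h s" for s
    have de: "dim_vec (e s) = l+1" for s unfolding e_def using dM by simp
    have eB: "cmod (e s $ k) \<le> B0" if "k < l+1" for s k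
    proof -
      have "k < dim_vec (e s)" using de that by simp
      moreover have "supnorm (e s) \<le> B0" using B0 unfolding e_def by simp
      ultimately show ?thesis using supnorm_comp[of k "e s"] by linarith
    qed
    have B0pos: "0 \<le> B0" using eB[of 0 undefined] norm_ge_zero[of "e undefined $ 0"] by linarith
    define f where "f k s = (?L *\<^sub>v e s) $ k" for k s
    have fB: "cmod (f k s) \<le> (cmod lam + 1) * B0" if "k < l+1" for k s
    proof -
      have "f k s = lam * e s $ k + (if k = 0 then 0 else e s $ (k-1))"
        unfolding f_def by (rule Lam_mult[OF de that])
      also have "cmod \<dots> \<le> cmod lam * B0 + B0"
      proof -
        have "cmod (lam * e s $ k) \<le> cmod lam * B0"
          unfolding norm_mult by (rule mult_left_mono[OF eB[OF that]]) simp
        moreover have "cmod (if k = 0 then 0 else e s $ (k-1)) \<le> B0"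
          using eB[of "k-1" s] that B0pos by auto
        ultimately show ?thesis by (intro norm_triangle_le add_mono)
      qed
      finally show ?thesis by (simp add: algebra_simps)
    qed
    have ind: "\<exists>G. \<forall>j\<le>k. (\<exists>C. \<forall>s. cmod (G j s) \<le> C) \<and>
        (\<forall>s. G j s - lam * G j (R s) = f j s + (if j = 0 then 0 else G (j-1) (R s)))"
      if "k \<le> l" for k
      using that
    proof (induction k)
      case 0
      have "\<exists>u. (\<forall>s. u s - lam * u (R s) = f 0 s) \<and> (\<exists>C. \<forall>s. cmod (u s) \<le> C)"
        by (rule scal_exist[OF assms(1,2,3) fB]) simp
      then obtain u where "\<forall>s. u s - lam * u (R s) = f 0 s" "\<exists>C. \<forall>s. cmod (u s) \<le> C" by blast
      then show ?case by (intro exI[of _ "\<lambda>_. u"]) auto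
    next
      case (Suc k)
      then obtain G where G: "\<forall>j\<le>k. (\<exists>C. \<forall>s. cmod (G j s) \<le> C) \<and>
        (\<forall>s. G j s - lam * G j (R s) = f j s + (if j = 0 then 0 else G (j-1) (R s)))" by auto
      then obtain C where C: "\<forall>s. cmod (G k s) \<le> C" by blast
      have "cmod (f (Suc k) s + G k (R s)) \<le> (cmod lam + 1) * B0 + C" for s
      proof (rule norm_triangle_le, rule add_mono)
        show "cmod (f (Suc k) s) \<le> (cmod lam + 1) * B0" using Suc.prems by (intro fB) simp
        show "cmod (G k (R s)) \<le> C" using C by blast
      qed
      then have "\<exists>u. (\<forall>s. u s - lam * u (R s) = f (Suc k) s + G k (R s)) \<and> (\<exists>C. \<forall>s. cmod (u s) \<le> C)"
        by (rule scal_exist[OF assms(1,2,3)])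
      then obtain u where u: "\<forall>s. u s - lam * u (R s) = f (Suc k) s + G k (R s)"
        "\<exists>C. \<forall>s. cmod (u s) \<le> C" by blast
      show ?case
      proof (intro exI[of _ "G(Suc k := u)"] allI impI)
        fix j assume j: "j \<le> Suc k"
        show "(\<exists>C. \<forall>s. cmod ((G(Suc k := u)) j s) \<le> C) \<and>
          (\<forall>s. (G(Suc k := u)) j s - lam * (G(Suc k := u)) j (R s) =
            f j s + (if j = 0 then 0 else (G(Suc k := u)) (j-1) (R s)))"
        proof (cases "j = Suc k")
          case True then show ?thesis using u by simp
        next
          case False
          then have "j \<le> k" using j by simp
          then show ?thesis using G False by auto
        qed
      qed
    qed
    from ind[of l] obtain G where G: "\<forall>j\<le>l. (\<exists>C. \<forall>s. cmod (G j s) \<le> C) \<and>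
        (\<forall>s. G j s - lam * G j (R s) = f j s + (if j = 0 then 0 else G (j-1) (R s)))" by auto
    have "\<forall>j. \<exists>C. j \<le> l \<longrightarrow> (\<forall>s. cmod (G j s) \<le> C)" using G by blast
    then obtain CG where CG: "\<And>j s. j \<le> l \<Longrightarrow> cmod (G j s) \<le> CG j" by metis
    define hh where "hh s = h s + vec (l+1) (\<lambda>k. G k s)" for s
    have dhh: "dim_vec (hh s) = l+1" for s unfolding hh_def by simp
    have chh: "hh s $ k = h s $ k + G k s" if "k < l+1" for s k
      unfolding hh_def using that dh by simp
    have rel: "hh (R s) = ?M *\<^sub>v hh s" for s
    proof -
      have hc: "h (R s) \<in> carrier_vec (l+1)" using dh by (rule carrier_vecI)
      have Mhc: "?M *\<^sub>v h s \<in> carrier_vec (l+1)" using dM by (rule carrier_vecI)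
      have "?L *\<^sub>v hh (R s) = hh s"
      proof (rule eq_vecI)
        fix k assume "k < dim_vec (hh s)"
        then have k: "k < l+1" using dhh by simp
        have "?L *\<^sub>v e s = ?L *\<^sub>v h (R s) - ?L *\<^sub>v (?M *\<^sub>v h s)"
          unfolding e_def
          by (rule mult_minus_distrib_mat_vec[OF Lam_carrier hc Mhc])
        also have "?L *\<^sub>v (?M *\<^sub>v h s) = h s" using equiv[OF dh[of s] dM[of "h s"]] by simp
        finally have "?L *\<^sub>v e s = ?L *\<^sub>v h (R s) - h s" .
        then have "f k s = (?L *\<^sub>v h (R s)) $ k - h s $ k"
          unfolding f_def using k dh by simp
        moreover have "(?L *\<^sub>v h (R s)) $ k = lam * h (R s) $ k + (if k = 0 then 0 else h (R s) $ (k-1))"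
          by (rule Lam_mult[OF dh k])
        moreover have "(?L *\<^sub>v hh (R s)) $ k = lam * hh (R s) $ k + (if k = 0 then 0 else hh (R s) $ (k-1))"
          by (rule Lam_mult[OF dhh k])
        moreover have "G k s - lam * G k (R s) = f k s + (if k = 0 then 0 else G (k-1) (R s))"
          using G k by auto
        ultimately show "(?L *\<^sub>v hh (R s)) $ k = hh s $ k"
          using chh[OF k] chh[OF k, of "R s"] chh[of "k-1" "R s"] k
          by (cases "k = 0") (auto simp: algebra_simps)
      qed (simp add: dhh Lambda_mat_def)
      then show ?thesis using equiv dhh by blast
    qed
    have "supnorm (hh s - h s) \<le> Max (CG ` {..l})" for s
    proof (rule supnorm_le)
      show "0 < dim_vec (hh s - h s)" using dh by simp
    next
      fix i assume "i < dim_vec (hh s - h s)"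
      then have i: "i < l+1" using dh by simp
      then have "(hh s - h s) $ i = G i s" using chh[OF i] dh by simp
      also have "cmod \<dots> \<le> CG i" using CG i by simp
      also have "\<dots> \<le> Max (CG ` {..l})" using i by (intro Max_ge) auto
      finally show "cmod ((hh s - h s) $ i) \<le> Max (CG ` {..l})" .
    qed
    then show "\<exists>hh. (\<forall>s. dim_vec (hh s) = l + 1) \<and> (\<forall>s. hh (R s) = ?M *\<^sub>v hh s) \<and>
           (\<exists>B. \<forall>s. supnorm (hh s - h s) \<le> B)"
      using dhh rel by blast
  next
    fix h1 h2
    assume P1: "(\<forall>s. dim_vec (h1 s) = l + 1) \<and> (\<forall>s. h1 (R s) = ?M *\<^sub>v h1 s) \<and>
           (\<exists>B. \<forall>s. supnorm (h1 s - h s) \<le> B)"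
      and P2: "(\<forall>s. dim_vec (h2 s) = l + 1) \<and> (\<forall>s. h2 (R s) = ?M *\<^sub>v h2 s) \<and>
           (\<exists>B. \<forall>s. supnorm (h2 s - h s) \<le> B)"
    from P1 obtain B1 where d1: "\<And>s. dim_vec (h1 s) = l+1" and r1: "\<And>s. h1 (R s) = ?M *\<^sub>v h1 s"
      and B1: "\<And>s. supnorm (h1 s - h s) \<le> B1" by blast
    from P2 obtain B2 where d2: "\<And>s. dim_vec (h2 s) = l+1" and r2: "\<And>s. h2 (R s) = ?M *\<^sub>v h2 s"
      and B2: "\<And>s. supnorm (h2 s - h s) \<le> B2" by blast
    have L1: "?L *\<^sub>v h1 (R s) = h1 s" for s using equiv[of "h1 s" "h1 (R s)"] d1 r1 by blast
    have L2: "?L *\<^sub>v h2 (R s) = h2 s" for s using equiv[of "h2 s" "h2 (R s)"] d2 r2 by blast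
    have "\<forall>s. h1 s $ k = h2 s $ k" if "k < l+1" for k
      using that
    proof (induction k rule: less_induct)
      case (less k)
      define D where "D s = h1 s $ k - h2 s $ k" for s
      have "D s = lam * D (R s)" for s
      proof -
        have a: "lam * h1 (R s) $ k + (if k = 0 then 0 else h1 (R s) $ (k-1)) = h1 s $ k"
          using Lam_mult[OF d1 less.prems, of lam "R s"] L1[of s] by simp
        have b: "lam * h2 (R s) $ k + (if k = 0 then 0 else h2 (R s) $ (k-1)) = h2 s $ k"
          using Lam_mult[OF d2 less.prems, of lam "R s"] L2[of s] by simp
        have c: "k \<noteq> 0 \<Longrightarrow> h1 (R s) $ (k-1) = h2 (R s) $ (k-1)"
          using less.IH[of "k-1"] less.prems by auto
        define t where "t = (if k = 0 then 0 else h2 (R s) $ (k-1))"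
        have a': "h1 s $ k = lam * h1 (R s) $ k + t" using a c unfolding t_def by (cases "k=0") auto
        have b': "h2 s $ k = lam * h2 (R s) $ k + t" using b unfolding t_def by auto
        show ?thesis unfolding D_def a' b' by (simp add: algebra_simps)
      qed
      moreover have "cmod (D s) \<le> B1 + B2" for s
      proof -
        have "D s = (h1 s - h s) $ k - (h2 s - h s) $ k"
          unfolding D_def using less.prems dh by simp
        moreover have "cmod ((h1 s - h s) $ k) \<le> B1"
          using supnorm_comp[of k "h1 s - h s"] B1[of s] less.prems dh by simp
        moreover have "cmod ((h2 s - h s) $ k) \<le> B2"
          using supnorm_comp[of k "h2 s - h s"] B2[of s] less.prems dh by simp
        ultimately show ?thesis using norm_triangle_ineq4[of "(h1 s - h s) $ k" "(h2 s - h s) $ k"] by simp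
      qed
      ultimately have "D s = 0" for s by (rule scal_uniq[OF assms(1,2,3)])
      then show ?case unfolding D_def by simp
    qed
    then have "h1 s = h2 s" for s by (intro eq_vecI) (auto simp: d1 d2)
    then show "h1 = h2" by blast
  qed
qed
end
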